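(* Let $\Delta=(\alpha_1,\dots,\alpha_N)$ be ordered. Let $B\subset{\cal B}(\Delta)$ be the set of bases $b=(\alpha_{i_1},\dots,\alpha_{i_r})$, $i_1<\dots<i_r$, such that for every index $j\notin\{i_1,\dots,i_r\}$ the set $\{\alpha_j\}\cup\{\alpha_{i_p}: i_p>j\}$ is linearly independent. Then $(\phi_b)_{b\in B}$ is a basis of $S_\Delta$. Moreover, consider the space of all linear relations $\sum_{\sigma\in{\cal B}(\Delta)}c_\sigma\phi_\sigma=0$, i.e. the kernel of the map from the free vector space on symbols $[\sigma]$, $\sigma\in{\cal B}(\Delta)$, to $R_\Delta$. This space is spanned by the Orlik–Solomon relations $$r_{\sigma,\alpha}=[\sigma]-\sum_{\beta\in\sigma,\ c_{\alpha\beta}\ne0}c_{\alpha\beta}\,[\sigma\cup\{\alpha\}\setminus\{\beta\}],$$ for $\sigma\in{\cal B}(\Delta)$ and $\alpha\in\Delta\setminus\sigma$, where $\alpha=\sum_{\beta\in\sigma}c_{\alpha\beta}\beta$.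
   Context: Let $k$ be a field of characteristic zero, $V$ a $k$-vector space of dimension $r$, and $V^*$ its dual, with $S(V)$ identified with polynomial functions on $V^*$. Let $\Delta\subset V$ be a finite set of nonzero vectors spanning $V$, and $R_\Delta=\Delta^{-1}S(V)$ (rational functions on $V^*$ with the elements of $\Delta$ inverted). ${\cal B}(\Delta)$ is the set of subsets of $\Delta$ forming a basis of $V$. For $\sigma\in{\cal B}(\Delta)$, $\phi_\sigma=1/\prod_{\alpha\in\sigma}\alpha$. $S_\Delta$ is the $k$-span of the $\phi_\sigma$, $\sigma\in{\cal B}(\Delta)$. Note that for $c_{\alpha\beta}\neq0$, $\sigma\cup\{\alpha\}\setminus\{\beta\}\in{\cal B}(\Delta)$. *)

theory Defs
  imports "HOL-Analysis.Analysis" "HOL-Library.Function_Algebras"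
begin

text \<open>V is modelled as 'n => 'k (finite index type 'n, dimension r = CARD('n)),
  V* likewise, with the pairing below. Delta is a list alpha_0,...,alpha_{N-1},
  and subsets of Delta are represented by index sets.\<close>

definition vscale :: "'k::field \<Rightarrow> ('n \<Rightarrow> 'k) \<Rightarrow> ('n \<Rightarrow> 'k)" where
  "vscale c v = (\<lambda>i. c * v i)"

definition pairing :: "('n::finite \<Rightarrow> 'k::field) \<Rightarrow> ('n \<Rightarrow> 'k) \<Rightarrow> 'k" where
  "pairing v x = (\<Sum>i\<in>UNIV. v i * x i)"

definition lin_indep :: "('n \<Rightarrow> 'k::field) set \<Rightarrow> bool" where
  "lin_indep S \<longleftrightarrow> \<not> module.dependent vscale S"

definition calB :: "(nat \<Rightarrow> ('n::finite \<Rightarrow> 'k::field)) \<Rightarrow> nat \<Rightarrow> nat set set" where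
  "calB \<alpha> N = {\<sigma>. \<sigma> \<subseteq> {..<N} \<and> lin_indep (\<alpha> ` \<sigma>) \<and> module.span vscale (\<alpha> ` \<sigma>) = UNIV}"

definition Bset :: "(nat \<Rightarrow> ('n::finite \<Rightarrow> 'k::field)) \<Rightarrow> nat \<Rightarrow> nat set set" where
  "Bset \<alpha> N = {b \<in> calB \<alpha> N. \<forall>j<N. j \<notin> b \<longrightarrow> lin_indep (\<alpha> ` ({j} \<union> {i\<in>b. i > j}))}"

definition regular_set :: "(nat \<Rightarrow> ('n::finite \<Rightarrow> 'k::field)) \<Rightarrow> nat \<Rightarrow> ('n \<Rightarrow> 'k) set" where
  "regular_set \<alpha> N = {x. \<forall>i<N. pairing (\<alpha> i) x \<noteq> 0}"

definition phi :: "(nat \<Rightarrow> ('n::finite \<Rightarrow> 'k::field)) \<Rightarrow> nat set \<Rightarrow> ('n \<Rightarrow> 'k) \<Rightarrow> 'k" where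
  "phi \<alpha> \<sigma> x = 1 / (\<Prod>i\<in>\<sigma>. pairing (\<alpha> i) x)"

definition coef :: "(nat \<Rightarrow> ('n::finite \<Rightarrow> 'k::field)) \<Rightarrow> nat set \<Rightarrow> nat \<Rightarrow> nat \<Rightarrow> 'k" where
  "coef \<alpha> \<sigma> a = (THE c. (\<forall>\<beta>. \<beta> \<notin> \<sigma> \<longrightarrow> c \<beta> = 0) \<and>
                          \<alpha> a = (\<Sum>\<beta>\<in>\<sigma>. vscale (c \<beta>) (\<alpha> \<beta>)))"

text \<open>Elements of the free vector space on symbols [sigma] are functions nat set => 'k.\<close>
definition fscale :: "'k::field \<Rightarrow> (nat set \<Rightarrow> 'k) \<Rightarrow> (nat set \<Rightarrow> 'k)" where
  "fscale t f = (\<lambda>\<sigma>. t * f \<sigma>)"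

definition os_rel :: "(nat \<Rightarrow> ('n::finite \<Rightarrow> 'k::field)) \<Rightarrow> nat set \<Rightarrow> nat \<Rightarrow> nat set \<Rightarrow> 'k" where
  "os_rel \<alpha> \<sigma> a = (\<lambda>\<tau>. (if \<tau> = \<sigma> then 1 else 0)
      - (\<Sum>\<beta>\<in>\<sigma>. if coef \<alpha> \<sigma> a \<beta> \<noteq> 0 \<and> \<tau> = insert a (\<sigma> - {\<beta>}) then coef \<alpha> \<sigma> a \<beta> else 0))"

end

theory Submission
  imports Defs "HOL-Computational_Algebra.Polynomial"
begin

lemma sum_fun_apply': "(sum f A) x = sum (\<lambda>a. f a x) A"
  by (induction A rule: infinite_finite_induct) auto

lemma pairing_add: "pairing a (x + y) = pairing a x + pairing a y"
  by (simp add: pairing_def distrib_left sum.distrib)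

lemma pairing_scale: "pairing a (vscale t x) = t * pairing a x"
  by (simp add: pairing_def vscale_def sum_distrib_left algebra_simps)

lemma pairing_diff: "pairing a (x - y) = pairing a x - pairing a y"
  by (simp add: pairing_def right_diff_distrib sum_subtractf)

lemma pairing_zero: "pairing a 0 = 0"
  by (simp add: pairing_def)

lemma pairing_lc: "pairing (\<lambda>n. \<Sum>i\<in>S. c i * \<alpha> i n) x = (\<Sum>i\<in>S. c i * pairing (\<alpha> i) x)"
  by (simp add: pairing_def sum_distrib_right sum_distrib_left mult.assoc)
     (rule sum.swap)

lemma poly_fun_zero:
  fixes q :: "'k::field_char_0 poly"
  assumes "finite E" "\<And>t. t \<notin> E \<Longrightarrow> poly q t = 0"
  shows "poly q s = 0"
proof (cases "q = 0")
  case False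
  then have "finite {x. poly q x = 0}" by (rule poly_roots_finite)
  moreover have "UNIV - E \<subseteq> {x. poly q x = 0}" using assms(2) by auto
  ultimately have "finite (UNIV - E)" by (rule finite_subset[rotated])
  with assms(1) have "finite (UNIV :: 'k set)" by (metis Diff_Un Diff_empty finite_Diff2 Un_Diff_cancel2 finite_Un)
  then show ?thesis using infinite_UNIV_char_0 by blast
qed simp

lemma line_lemma:
  fixes a d :: "nat \<Rightarrow> 'k::field_char_0"
  assumes A: "finite A" and ad: "\<And>i. i \<in> A \<Longrightarrow> a i \<noteq> 0 \<or> d i \<noteq> 0"
    and Z: "finite Z"
    and H: "\<And>t. t \<notin> Z \<Longrightarrow> (\<forall>i\<in>A. a i + t * d i \<noteq> 0) \<Longrightarrow>
              (\<Sum>b\<in>F. c b * (\<Prod>i\<in>A - b. a i + t * d i)) = 0"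
  shows "(\<Sum>b\<in>F. c b * (\<Prod>i\<in>A - b. a i)) = 0"
proof -
  define q where "q = (\<Sum>b\<in>F. smult (c b) (\<Prod>i\<in>A - b. [:a i, d i:]))"
  have pq: "poly q t = (\<Sum>b\<in>F. c b * (\<Prod>i\<in>A - b. a i + t * d i))" for t
    by (simp add: q_def poly_sum poly_prod)
  define E where "E = Z \<union> (\<lambda>i. - a i / d i) ` A"
  have "finite E" using A Z by (simp add: E_def)
  moreover have "poly q t = 0" if "t \<notin> E" for t
  proof -
    have "\<forall>i\<in>A. a i + t * d i \<noteq> 0"
    proof
      fix i assume i: "i \<in> A"
      show "a i + t * d i \<noteq> 0"
      proof
        assume e: "a i + t * d i = 0"
        show False
        proof (cases "d i = 0")
          case True then show False using e ad[OF i] by simp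
        next
          case False
          then have "t = - a i / d i" using e by (simp add: field_simps add_eq_0_iff)
          then show False using that i by (auto simp: E_def)
        qed
      qed
    qed
    moreover have "t \<notin> Z" using that by (simp add: E_def)
    ultimately show ?thesis using pq H by simp
  qed
  ultimately have "poly q 0 = 0" by (rule poly_fun_zero)
  then show ?thesis using pq[of 0] by simp
qed

definition subsp :: "('n::finite \<Rightarrow> 'k::field) set \<Rightarrow> bool" where
  "subsp W \<longleftrightarrow> 0 \<in> W \<and> (\<forall>x\<in>W. \<forall>y\<in>W. x + y \<in> W) \<and> (\<forall>x\<in>W. \<forall>t. vscale t x \<in> W)"

definition rind :: "(nat \<Rightarrow> ('n::finite \<Rightarrow> 'k::field)) \<Rightarrow> ('n \<Rightarrow> 'k) set \<Rightarrow> nat set \<Rightarrow> bool" where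
  "rind \<alpha> W S \<longleftrightarrow> (\<forall>c. (\<forall>x\<in>W. (\<Sum>i\<in>S. c i * pairing (\<alpha> i) x) = 0) \<longrightarrow> (\<forall>i\<in>S. c i = 0))"

definition nbc :: "(nat \<Rightarrow> ('n::finite \<Rightarrow> 'k::field)) \<Rightarrow> ('n \<Rightarrow> 'k) set \<Rightarrow> nat \<Rightarrow> nat set \<Rightarrow> bool" where
  "nbc \<alpha> W N b \<longleftrightarrow> b \<subseteq> {..<N} \<and> rind \<alpha> W b \<and> (\<forall>j<N. j \<notin> b \<longrightarrow> rind \<alpha> W (insert j {i\<in>b. j < i}))"

definition reg :: "(nat \<Rightarrow> ('n::finite \<Rightarrow> 'k::field)) \<Rightarrow> ('n \<Rightarrow> 'k) set \<Rightarrow> nat \<Rightarrow> ('n \<Rightarrow> 'k) set" where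
  "reg \<alpha> W N = {x\<in>W. \<forall>i<N. pairing (\<alpha> i) x \<noteq> 0}"

lemma subsp_line: "subsp W \<Longrightarrow> x \<in> W \<Longrightarrow> v \<in> W \<Longrightarrow> x + vscale t v \<in> W"
  by (simp add: subsp_def)

lemma subsp_line': "subsp W \<Longrightarrow> x \<in> W \<Longrightarrow> v \<in> W \<Longrightarrow> x - vscale t v \<in> W"
proof -
  assume "subsp W" "x \<in> W" "v \<in> W"
  then have "x + vscale (-t) v \<in> W" by (rule subsp_line)
  moreover have "x + vscale (-t) v = x - vscale t v" by (auto simp: vscale_def)
  ultimately show ?thesis by simp
qed

lemma pairing_line: "pairing a (x + vscale t v) = pairing a x + t * pairing a v"
  by (simp add: pairing_add pairing_scale)

lemma pairing_line': "pairing a (x - vscale t v) = pairing a x - t * pairing a v"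
  by (simp add: pairing_diff pairing_scale)

lemma rind_mono:
  assumes "rind \<alpha> W S" "T \<subseteq> S" "finite S"
  shows "rind \<alpha> W T"
  unfolding rind_def
proof (intro allI impI)
  fix c assume h: "\<forall>x\<in>W. (\<Sum>i\<in>T. c i * pairing (\<alpha> i) x) = 0"
  define c' where "c' i = (if i \<in> T then c i else 0)" for i
  have "(\<Sum>i\<in>S. c' i * pairing (\<alpha> i) x) = (\<Sum>i\<in>T. c i * pairing (\<alpha> i) x)" for x
  proof -
    have "(\<Sum>i\<in>S. c' i * pairing (\<alpha> i) x) = (\<Sum>i\<in>S. if i \<in> T then c i * pairing (\<alpha> i) x else 0)"
      by (rule sum.cong) (auto simp: c'_def)
    also have "\<dots> = (\<Sum>i\<in>S \<inter> T. c i * pairing (\<alpha> i) x)"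
      using assms(3) by (simp add: sum.inter_restrict)
    also have "S \<inter> T = T" using assms(2) by auto
    finally show ?thesis .
  qed
  then have "\<forall>i\<in>S. c' i = 0" using assms(1) h unfolding rind_def by metis
  then show "\<forall>i\<in>T. c i = 0" using assms(2) unfolding c'_def by (metis subsetD)
qed

lemma not_rind:
  assumes "finite S" "j \<in> S" "m \<in> S" "j \<noteq> m" "\<forall>x\<in>W. pairing (\<alpha> j) x = l * pairing (\<alpha> m) x"
  shows "\<not> rind \<alpha> W S"
proof
  assume r: "rind \<alpha> W S"
  define c where "c i = (if i = j then 1 else if i = m then - l else 0)" for i
  have "(\<Sum>i\<in>S. c i * pairing (\<alpha> i) x) = 0" if "x \<in> W" for x
  proof -
    have "(\<Sum>i\<in>S. c i * pairing (\<alpha> i) x) = (\<Sum>i\<in>S. (if i = j then pairing (\<alpha> j) x else 0)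
        + (if i = m then - l * pairing (\<alpha> m) x else 0))"
      by (rule sum.cong) (auto simp: c_def assms(4))
    also have "\<dots> = pairing (\<alpha> j) x - l * pairing (\<alpha> m) x"
      using assms(1-3) by (simp add: sum.distrib)
    finally show ?thesis using assms(5) that by simp
  qed
  then have "c j = 0" using r assms(2) unfolding rind_def by metis
  then show False by (simp add: c_def)
qed

lemma rind_restr:
  assumes W: "subsp W" and v: "v \<in> W" "pairing (\<alpha> m) v \<noteq> 0"
    and S: "finite S" "m \<notin> S" and r: "rind \<alpha> W (insert m S)"
  shows "rind \<alpha> {x\<in>W. pairing (\<alpha> m) x = 0} S"
  unfolding rind_def
proof (intro allI impI)
  fix c assume h: "\<forall>x\<in>{x\<in>W. pairing (\<alpha> m) x = 0}. (\<Sum>i\<in>S. c i * pairing (\<alpha> i) x) = 0"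
  define f where "f x = (\<Sum>i\<in>S. c i * pairing (\<alpha> i) x)" for x
  have fx: "f x = (pairing (\<alpha> m) x / pairing (\<alpha> m) v) * f v" if x: "x \<in> W" for x
  proof -
    define t where "t = pairing (\<alpha> m) x / pairing (\<alpha> m) v"
    have "x - vscale t v \<in> W" using W x v(1) by (rule subsp_line')
    moreover have "pairing (\<alpha> m) (x - vscale t v) = 0"
      using v by (simp add: pairing_line' t_def)
    ultimately have "f (x - vscale t v) = 0" using h by (simp add: f_def)
    moreover have "f (x - vscale t v) = f x - t * f v"
      by (simp add: f_def pairing_line' algebra_simps sum_subtractf sum_distrib_left)
    ultimately show ?thesis by (simp add: t_def)
  qed
  define c' where "c' = c(m := - f v / pairing (\<alpha> m) v)"
  have "(\<Sum>i\<in>insert m S. c' i * pairing (\<alpha> i) x) = 0" if "x \<in> W" for x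
  proof -
    have "(\<Sum>i\<in>insert m S. c' i * pairing (\<alpha> i) x) = c' m * pairing (\<alpha> m) x + f x"
      using S unfolding f_def c'_def by (simp, intro sum.cong) auto
    also have "\<dots> = 0" using fx[OF that] v by (simp add: c'_def field_simps)
    finally show ?thesis .
  qed
  then have "\<forall>i\<in>insert m S. c' i = 0" using r unfolding rind_def by metis
  then show "\<forall>i\<in>S. c i = 0" using S unfolding c'_def by (metis fun_upd_other insertCI)
qed

lemma prop_restr:
  assumes W: "subsp W" and v: "v \<in> W" "pairing (\<alpha> m) v \<noteq> 0"
    and h: "\<forall>x\<in>{x\<in>W. pairing (\<alpha> m) x = 0}. pairing (\<alpha> j) x = 0"
  shows "\<forall>x\<in>W. pairing (\<alpha> j) x = (pairing (\<alpha> j) v / pairing (\<alpha> m) v) * pairing (\<alpha> m) x"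
proof
  fix x assume x: "x \<in> W"
  define t where "t = pairing (\<alpha> m) x / pairing (\<alpha> m) v"
  have "x - vscale t v \<in> W" using W x v(1) by (rule subsp_line')
  moreover have "pairing (\<alpha> m) (x - vscale t v) = 0"
    using v by (simp add: pairing_line' t_def)
  ultimately have "pairing (\<alpha> j) (x - vscale t v) = 0" using h by simp
  then show "pairing (\<alpha> j) x = (pairing (\<alpha> j) v / pairing (\<alpha> m) v) * pairing (\<alpha> m) x"
    by (simp add: pairing_line' t_def field_simps)
qed

lemma subsp_H:
  assumes "subsp W" shows "subsp {x\<in>W. pairing (\<alpha> m) x = 0}"
  using assms by (auto simp: subsp_def pairing_add pairing_scale pairing_zero)

lemma sum_Pow_insert:
  assumes "finite A" "m \<notin> A"
  shows "(\<Sum>b\<in>Pow (insert m A). g b) = (\<Sum>b\<in>Pow A. g b) + (\<Sum>b\<in>Pow A. g (insert m b))"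
proof -
  have inj: "inj_on (insert m) (Pow A)"
    using assms(2) by (auto simp: inj_on_def)
  have "(\<Sum>b\<in>Pow (insert m A). g b) = (\<Sum>b\<in>Pow A \<union> insert m ` Pow A. g b)"
    by (simp add: Pow_insert)
  also have "\<dots> = (\<Sum>b\<in>Pow A. g b) + (\<Sum>b\<in>insert m ` Pow A. g b)"
    using assms by (intro sum.union_disjoint) auto
  also have "(\<Sum>b\<in>insert m ` Pow A. g b) = (\<Sum>b\<in>Pow A. g (insert m b))"
    using inj by (simp add: sum.reindex)
  finally show ?thesis .
qed

lemma mult_through:
  assumes "finite A" "b \<subseteq> A" "\<forall>i\<in>A. pairing (\<alpha> i) x \<noteq> 0"
  shows "(\<Prod>i\<in>A. pairing (\<alpha> i) x) * phi \<alpha> b x = (\<Prod>i\<in>A - b. pairing (\<alpha> i) x)"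
proof -
  have "(\<Prod>i\<in>A. pairing (\<alpha> i) x) = (\<Prod>i\<in>A - b. pairing (\<alpha> i) x) * (\<Prod>i\<in>b. pairing (\<alpha> i) x)"
    using assms by (simp add: prod.subset_diff)
  moreover have "(\<Prod>i\<in>b. pairing (\<alpha> i) x) \<noteq> 0"
    using assms by (subst prod_zero_iff) (auto intro: finite_subset)
  ultimately show ?thesis by (simp add: phi_def)
qed

lemma sum_mult_through:
  assumes "finite A" "\<forall>i\<in>A. pairing (\<alpha> i) x \<noteq> 0"
  shows "(\<Prod>i\<in>A. pairing (\<alpha> i) x) * (\<Sum>b\<in>Pow A. c b * phi \<alpha> b x)
       = (\<Sum>b\<in>Pow A. c b * (\<Prod>i\<in>A - b. pairing (\<alpha> i) x))"
proof -
  have "(\<Prod>i\<in>A. pairing (\<alpha> i) x) * (\<Sum>b\<in>Pow A. c b * phi \<alpha> b x)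
      = (\<Sum>b\<in>Pow A. c b * ((\<Prod>i\<in>A. pairing (\<alpha> i) x) * phi \<alpha> b x))"
    by (simp add: sum_distrib_left algebra_simps)
  also have "\<dots> = (\<Sum>b\<in>Pow A. c b * (\<Prod>i\<in>A - b. pairing (\<alpha> i) x))"
    using assms by (intro sum.cong refl) (simp add: mult_through)
  finally show ?thesis .
qed

lemma prod_ne0: "finite A \<Longrightarrow> \<forall>i\<in>A. pairing (\<alpha> i) x \<noteq> 0 \<Longrightarrow> (\<Prod>i\<in>A. pairing (\<alpha> i) x) \<noteq> 0"
  by (simp add: prod_zero_iff)

lemma indep_main:
  fixes \<alpha> :: "nat \<Rightarrow> ('n::finite \<Rightarrow> 'k::field_char_0)"
  assumes "subsp W" "\<forall>i<N. \<exists>x\<in>W. pairing (\<alpha> i) x \<noteq> 0" "\<forall>b. \<not> nbc \<alpha> W N b \<longrightarrow> c b = 0"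
    "\<forall>x\<in>reg \<alpha> W N. (\<Sum>b\<in>Pow {..<N}. c b * phi \<alpha> b x) = 0"
  shows "c b = 0"
  using assms
proof (induction N arbitrary: W c b)
  case 0
  have "0 \<in> reg \<alpha> W 0" using 0(1) by (simp add: reg_def subsp_def)
  then have c0: "c {} = 0" using 0(4) by (simp add: phi_def) blast
  show ?case
  proof (cases "b = {}")
    case True then show ?thesis using c0 by simp
  next
    case False then have "\<not> nbc \<alpha> W 0 b" by (simp add: nbc_def)
    then show ?thesis using 0(3) by simp
  qed
next
  case (Suc m)
  note W = Suc.prems(1) and nz = Suc.prems(2) and cnbc = Suc.prems(3) and hsum = Suc.prems(4)
  obtain v where v: "v \<in> W" "pairing (\<alpha> m) v \<noteq> 0" using nz by blast
  define H where "H = {x\<in>W. pairing (\<alpha> m) x = 0}"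
  have split: "(\<Sum>b\<in>Pow {..<Suc m}. g b) = (\<Sum>b\<in>Pow {..<m}. g b) + (\<Sum>b\<in>Pow {..<m}. g (insert m b))"
    for g :: "nat set \<Rightarrow> 'k"
    by (simp add: lessThan_Suc sum_Pow_insert)
  have lin: "pairing (\<alpha> i) (x0 + vscale t v) = pairing (\<alpha> i) x0 + t * pairing (\<alpha> i) v" for i x0 t
    by (rule pairing_line)
  have claim1: "(\<Sum>b\<in>Pow {..<m}. c (insert m b) * phi \<alpha> b x0) = 0" if x0: "x0 \<in> reg \<alpha> H m" for x0
  proof -
    have x0W: "x0 \<in> W" and lm0: "pairing (\<alpha> m) x0 = 0" and li0: "\<forall>i<m. pairing (\<alpha> i) x0 \<noteq> 0"
      using x0 by (auto simp: reg_def H_def)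
    have L: "(\<Sum>b\<in>Pow {..<Suc m}. c b * (\<Prod>i\<in>{..<Suc m} - b. pairing (\<alpha> i) x0)) = 0"
    proof (rule line_lemma[where d = "\<lambda>i. pairing (\<alpha> i) v" and Z = "{}"])
      fix i assume "i \<in> {..<Suc m}"
      then show "pairing (\<alpha> i) x0 \<noteq> 0 \<or> pairing (\<alpha> i) v \<noteq> 0"
        using li0 v(2) by (cases "i = m") auto
    next
      fix t assume ne: "\<forall>i\<in>{..<Suc m}. pairing (\<alpha> i) x0 + t * pairing (\<alpha> i) v \<noteq> 0"
      define y where "y = x0 + vscale t v"
      have yreg: "y \<in> reg \<alpha> W (Suc m)"
        using ne subsp_line[OF W x0W v(1)] by (auto simp: reg_def y_def lin)
      have "(\<Prod>i\<in>{..<Suc m}. pairing (\<alpha> i) y) * (\<Sum>b\<in>Pow {..<Suc m}. c b * phi \<alpha> b y) = 0"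
        using hsum yreg by simp
      then have "(\<Sum>b\<in>Pow {..<Suc m}. c b * (\<Prod>i\<in>{..<Suc m} - b. pairing (\<alpha> i) y)) = 0"
        using yreg by (subst (asm) sum_mult_through) (auto simp: reg_def)
      then show "(\<Sum>b\<in>Pow {..<Suc m}. c b * (\<Prod>i\<in>{..<Suc m} - b. pairing (\<alpha> i) x0 + t * pairing (\<alpha> i) v)) = 0"
        by (simp add: y_def lin)
    qed auto
    have P1: "(\<Prod>i\<in>{..<Suc m} - b. pairing (\<alpha> i) x0) = 0" if "b \<subseteq> {..<m}" for b
      using that lm0 by (subst prod_zero_iff) auto
    have P2: "(\<Prod>i\<in>{..<Suc m} - insert m b. pairing (\<alpha> i) x0)
        = (\<Prod>i\<in>{..<m}. pairing (\<alpha> i) x0) * phi \<alpha> b x0" if "b \<subseteq> {..<m}" for b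
    proof -
      have "{..<Suc m} - insert m b = {..<m} - b" by auto
      then show ?thesis using mult_through[of "{..<m}" b \<alpha> x0] that li0 by simp
    qed
    have s1: "(\<Sum>b\<in>Pow {..<m}. c b * (\<Prod>i\<in>{..<Suc m} - b. pairing (\<alpha> i) x0)) = 0"
      by (rule sum.neutral) (simp add: P1)
    have s2: "(\<Sum>b\<in>Pow {..<m}. c (insert m b) * (\<Prod>i\<in>{..<Suc m} - insert m b. pairing (\<alpha> i) x0))
       = (\<Sum>b\<in>Pow {..<m}. c (insert m b) * ((\<Prod>i\<in>{..<m}. pairing (\<alpha> i) x0) * phi \<alpha> b x0))"
      by (rule sum.cong) (simp_all add: P2)
    have "0 = (\<Sum>b\<in>Pow {..<m}. c (insert m b) * ((\<Prod>i\<in>{..<m}. pairing (\<alpha> i) x0) * phi \<alpha> b x0))"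
      using L unfolding split s1 s2 by simp
    also have "\<dots> = (\<Prod>i\<in>{..<m}. pairing (\<alpha> i) x0) * (\<Sum>b\<in>Pow {..<m}. c (insert m b) * phi \<alpha> b x0)"
      by (simp add: sum_distrib_left algebra_simps)
    finally show ?thesis using prod_ne0[of "{..<m}" \<alpha> x0] li0 by simp
  qed
  have cins: "c (insert m b') = 0" if b': "b' \<subseteq> {..<m}" for b'
  proof (cases "\<exists>j<m. \<forall>x\<in>H. pairing (\<alpha> j) x = 0")
    case True
    then obtain j where j: "j < m" "\<forall>x\<in>H. pairing (\<alpha> j) x = 0" by blast
    then have prp: "\<forall>x\<in>W. pairing (\<alpha> j) x = (pairing (\<alpha> j) v / pairing (\<alpha> m) v) * pairing (\<alpha> m) x"
      using prop_restr[of W v \<alpha> m j] W v j(2) unfolding H_def by blast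
    show ?thesis
    proof (rule ccontr)
      assume "c (insert m b') \<noteq> 0"
      then have nb: "nbc \<alpha> W (Suc m) (insert m b')" using cnbc by blast
      have finb: "finite (insert m b')" using b' finite_subset by blast
      show False
      proof (cases "j \<in> b'")
        case True
        have "\<not> rind \<alpha> W (insert m b')"
          by (rule not_rind[OF finb _ _ _ prp]) (use True j(1) in simp_all)
        then show False using nb by (simp add: nbc_def)
      next
        case False
        have jn: "j \<notin> insert m b'" using False j(1) by simp
        have "rind \<alpha> W (insert j {i\<in>insert m b'. j < i})"
          using nb j(1) jn unfolding nbc_def by simp
        moreover have "\<not> rind \<alpha> W (insert j {i\<in>insert m b'. j < i})"
        proof (rule not_rind[OF _ _ _ _ prp])
          show "finite (insert j {i\<in>insert m b'. j < i})" using finb by simp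
          show "m \<in> insert j {i\<in>insert m b'. j < i}" using j(1) by simp
        qed (use j(1) in simp_all)
        ultimately show False by blast
      qed
    qed
  next
    case False
    then have nzH: "\<forall>i<m. \<exists>x\<in>H. pairing (\<alpha> i) x \<noteq> 0" by blast
    define c' where "c' b = (if m \<in> b then 0 else c (insert m b))" for b
    have "c' b' = 0"
    proof (rule Suc.IH[of H c' b'])
      show "subsp H" unfolding H_def by (rule subsp_H[OF W])
      show "\<forall>i<m. \<exists>x\<in>H. pairing (\<alpha> i) x \<noteq> 0" by (rule nzH)
      show "\<forall>b. \<not> nbc \<alpha> H m b \<longrightarrow> c' b = 0"
      proof (intro allI impI)
        fix b assume nn: "\<not> nbc \<alpha> H m b"
        show "c' b = 0"
        proof (rule ccontr)
          assume "c' b \<noteq> 0"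
          then have mb: "m \<notin> b" and "c (insert m b) \<noteq> 0" by (auto simp: c'_def split: if_splits)
          then have nb: "nbc \<alpha> W (Suc m) (insert m b)" using cnbc by blast
          then have bsub: "b \<subseteq> {..<m}" using mb by (auto simp: nbc_def less_Suc_eq)
          have finb: "finite b" using bsub finite_subset by blast
          have "rind \<alpha> H b" unfolding H_def
            by (rule rind_restr[of W v \<alpha> m, OF W v finb mb]) (use nb in \<open>simp add: nbc_def\<close>)
          moreover have "rind \<alpha> H (insert j {i\<in>b. j < i})" if "j < m" "j \<notin> b" for j
          proof -
            have "j < Suc m" "j \<notin> insert m b" using that by simp_all
            then have "rind \<alpha> W (insert j {i\<in>insert m b. j < i})"
              using nb unfolding nbc_def by blast
            moreover have "insert j {i\<in>insert m b. j < i} = insert m (insert j {i\<in>b. j < i})"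
              using that by auto
            ultimately have r: "rind \<alpha> W (insert m (insert j {i\<in>b. j < i}))" by simp
            show ?thesis unfolding H_def
            proof (rule rind_restr[of W v \<alpha> m, OF W v _ _ r])
              show "finite (insert j {i \<in> b. j < i})" using finb by simp
              show "m \<notin> insert j {i \<in> b. j < i}" using that mb by simp
            qed
          qed
          ultimately have "nbc \<alpha> H m b" using bsub by (simp add: nbc_def)
          then show False using nn by simp
        qed
      qed
      show "\<forall>x\<in>reg \<alpha> H m. (\<Sum>b\<in>Pow {..<m}. c' b * phi \<alpha> b x) = 0"
      proof
        fix x assume x: "x \<in> reg \<alpha> H m"
        have "(\<Sum>b\<in>Pow {..<m}. c' b * phi \<alpha> b x) = (\<Sum>b\<in>Pow {..<m}. c (insert m b) * phi \<alpha> b x)"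
          by (rule sum.cong) (auto simp: c'_def)
        then show "(\<Sum>b\<in>Pow {..<m}. c' b * phi \<alpha> b x) = 0" using claim1[OF x] by simp
      qed
    qed
    moreover have "m \<notin> b'" using b' by blast
    ultimately show ?thesis by (simp add: c'_def)
  qed
  define c0 where "c0 b = (if m \<in> b then 0 else c b)" for b
  have hs0: "(\<Sum>b\<in>Pow {..<m}. c0 b * phi \<alpha> b x) = 0" if x: "x \<in> reg \<alpha> W (Suc m)" for x
  proof -
    have "(\<Sum>b\<in>Pow {..<m}. c (insert m b) * phi \<alpha> (insert m b) x) = 0"
      by (rule sum.neutral) (simp add: cins)
    moreover have "(\<Sum>b\<in>Pow {..<m}. c0 b * phi \<alpha> b x) = (\<Sum>b\<in>Pow {..<m}. c b * phi \<alpha> b x)"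
      by (rule sum.cong) (auto simp: c0_def)
    moreover have "(\<Sum>b\<in>Pow {..<m}. c b * phi \<alpha> b x) + (\<Sum>b\<in>Pow {..<m}. c (insert m b) * phi \<alpha> (insert m b) x) = 0"
      using hsum x unfolding split by blast
    ultimately show ?thesis by simp
  qed
  have claim2: "(\<Sum>b\<in>Pow {..<m}. c0 b * phi \<alpha> b x0) = 0" if x0: "x0 \<in> reg \<alpha> W m" for x0
  proof -
    have x0W: "x0 \<in> W" and li0: "\<forall>i<m. pairing (\<alpha> i) x0 \<noteq> 0"
      using x0 by (auto simp: reg_def)
    have L: "(\<Sum>b\<in>Pow {..<m}. c0 b * (\<Prod>i\<in>{..<m} - b. pairing (\<alpha> i) x0)) = 0"
    proof (rule line_lemma[where d = "\<lambda>i. pairing (\<alpha> i) v"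
          and Z = "{t. pairing (\<alpha> m) x0 + t * pairing (\<alpha> m) v = 0}"])
      show "finite {t. pairing (\<alpha> m) x0 + t * pairing (\<alpha> m) v = 0}"
      proof (rule finite_subset[of _ "{- pairing (\<alpha> m) x0 / pairing (\<alpha> m) v}"])
        show "{t. pairing (\<alpha> m) x0 + t * pairing (\<alpha> m) v = 0} \<subseteq> {- pairing (\<alpha> m) x0 / pairing (\<alpha> m) v}"
          using v(2) by (auto simp: field_simps add_eq_0_iff)
      qed simp
    next
      fix t assume tz: "t \<notin> {t. pairing (\<alpha> m) x0 + t * pairing (\<alpha> m) v = 0}"
        and ne: "\<forall>i\<in>{..<m}. pairing (\<alpha> i) x0 + t * pairing (\<alpha> i) v \<noteq> 0"
      define y where "y = x0 + vscale t v"
      have yreg: "y \<in> reg \<alpha> W (Suc m)"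
        using ne tz subsp_line[OF W x0W v(1)] by (auto simp: reg_def y_def lin less_Suc_eq)
      have "(\<Prod>i\<in>{..<m}. pairing (\<alpha> i) y) * (\<Sum>b\<in>Pow {..<m}. c0 b * phi \<alpha> b y) = 0"
        using hs0 yreg by simp
      then have "(\<Sum>b\<in>Pow {..<m}. c0 b * (\<Prod>i\<in>{..<m} - b. pairing (\<alpha> i) y)) = 0"
        using yreg by (subst (asm) sum_mult_through) (auto simp: reg_def)
      then show "(\<Sum>b\<in>Pow {..<m}. c0 b * (\<Prod>i\<in>{..<m} - b. pairing (\<alpha> i) x0 + t * pairing (\<alpha> i) v)) = 0"
        by (simp add: y_def lin)
    qed (use li0 in auto)
    have "(\<Prod>i\<in>{..<m}. pairing (\<alpha> i) x0) * (\<Sum>b\<in>Pow {..<m}. c0 b * phi \<alpha> b x0) = 0"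
      using L li0 by (subst sum_mult_through) auto
    then show ?thesis using prod_ne0[of "{..<m}" \<alpha> x0] li0 by simp
  qed
  have c0z: "c0 b = 0" for b
  proof (rule Suc.IH[of W c0 b])
    show "subsp W" by (rule W)
    show "\<forall>i<m. \<exists>x\<in>W. pairing (\<alpha> i) x \<noteq> 0" using nz by simp
    show "\<forall>b. \<not> nbc \<alpha> W m b \<longrightarrow> c0 b = 0"
    proof (intro allI impI)
      fix b assume nn: "\<not> nbc \<alpha> W m b"
      show "c0 b = 0"
      proof (rule ccontr)
        assume "c0 b \<noteq> 0"
        then have mb: "m \<notin> b" and "c b \<noteq> 0" by (auto simp: c0_def split: if_splits)
        then have nb: "nbc \<alpha> W (Suc m) b" using cnbc by blast
        then have "nbc \<alpha> W m b" using mb by (auto simp: nbc_def less_Suc_eq)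
        then show False using nn by simp
      qed
    qed
    show "\<forall>x\<in>reg \<alpha> W m. (\<Sum>b\<in>Pow {..<m}. c0 b * phi \<alpha> b x) = 0" using claim2 by blast
  qed
  show ?case
  proof (cases "m \<in> b")
    case False then show ?thesis using c0z[of b] by (simp add: c0_def)
  next
    case True
    show ?thesis
    proof (rule ccontr)
      assume "c b \<noteq> 0"
      then have "nbc \<alpha> W (Suc m) b" using cnbc by blast
      then have "b - {m} \<subseteq> {..<m}" by (auto simp: nbc_def less_Suc_eq)
      then have "c (insert m (b - {m})) = 0" by (rule cins)
      then show False using True \<open>c b \<noteq> 0\<close> by (simp add: insert_absorb)
    qed
  qed
qed

lemma module_vscale: "module (vscale :: 'k::field \<Rightarrow> ('n \<Rightarrow> 'k) \<Rightarrow> ('n \<Rightarrow> 'k))"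
  by unfold_locales (simp_all add: vscale_def fun_eq_iff algebra_simps)

lemma module_fscale: "module (fscale :: 'k::field \<Rightarrow> (nat set \<Rightarrow> 'k) \<Rightarrow> (nat set \<Rightarrow> 'k))"
  by unfold_locales (simp_all add: fscale_def fun_eq_iff algebra_simps)

definition lc :: "(nat \<Rightarrow> ('n \<Rightarrow> 'k::field)) \<Rightarrow> nat set \<Rightarrow> (nat \<Rightarrow> 'k) \<Rightarrow> ('n \<Rightarrow> 'k)" where
  "lc \<alpha> S c = (\<lambda>n. \<Sum>i\<in>S. c i * \<alpha> i n)"

lemma sum_vscale: "(\<Sum>i\<in>S. vscale (c i) (\<alpha> i)) = lc \<alpha> S c"
  by (simp add: fun_eq_iff sum_fun_apply' vscale_def lc_def)

lemma sum_vscale_img: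
  assumes "inj_on \<alpha> S"
  shows "(\<Sum>v\<in>\<alpha> ` S. vscale (u v) v) = lc \<alpha> S (\<lambda>i. u (\<alpha> i))"
  using assms by (simp add: sum.reindex sum_vscale[symmetric])

lemma pairing_delta: "pairing w (\<lambda>n. if n = n0 then 1 else 0) = w n0"
proof -
  have "(\<Sum>i\<in>UNIV. w i * (if i = n0 then 1 else 0)) = (\<Sum>i\<in>UNIV. if i = n0 then w i else 0)"
    by (rule sum.cong) auto
  then show ?thesis by (simp add: pairing_def)
qed

lemma pairing_zero_left: "pairing 0 x = 0"
  by (simp add: pairing_def)

lemma pairing_lc': "pairing (lc \<alpha> S c) x = (\<Sum>i\<in>S. c i * pairing (\<alpha> i) x)"
  unfolding lc_def by (rule pairing_lc)

lemma rind_UNIV: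
  "rind \<alpha> UNIV S \<longleftrightarrow> (\<forall>c. lc \<alpha> S c = 0 \<longrightarrow> (\<forall>i\<in>S. c i = 0))"
proof -
  have "(\<forall>x\<in>UNIV. (\<Sum>i\<in>S. c i * pairing (\<alpha> i) x) = 0) \<longleftrightarrow> lc \<alpha> S c = 0" for c
  proof
    assume h: "\<forall>x\<in>UNIV. (\<Sum>i\<in>S. c i * pairing (\<alpha> i) x) = 0"
    show "lc \<alpha> S c = 0"
    proof
      fix n0
      have "pairing (lc \<alpha> S c) (\<lambda>n. if n = n0 then 1 else 0) = 0"
        using h by (simp add: pairing_lc')
      then show "lc \<alpha> S c n0 = 0 n0" by (simp add: pairing_delta)
    qed
  next
    assume "lc \<alpha> S c = 0"
    then show "\<forall>x\<in>UNIV. (\<Sum>i\<in>S. c i * pairing (\<alpha> i) x) = 0"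
      by (simp add: pairing_lc'[symmetric] pairing_zero_left)
  qed
  then show ?thesis by (simp add: rind_def)
qed

lemma lin_indep_rind:
  assumes fin: "finite S" and inj: "inj_on \<alpha> S"
  shows "lin_indep (\<alpha> ` S) \<longleftrightarrow> rind \<alpha> UNIV S"
proof -
  interpret M: module vscale by (rule module_vscale)
  have finI: "finite (\<alpha> ` S)" using fin by simp
  show ?thesis
  proof
    assume li: "lin_indep (\<alpha> ` S)"
    show "rind \<alpha> UNIV S" unfolding rind_UNIV
    proof (intro allI impI ballI)
      fix c i assume lc0: "lc \<alpha> S c = 0" and i: "i \<in> S"
      show "c i = 0"
      proof (rule ccontr)
        assume ci: "c i \<noteq> 0"
        define u where "u v = c (inv_into S \<alpha> v)" for v
        have "(\<Sum>v\<in>\<alpha> ` S. vscale (u v) v) = lc \<alpha> S (\<lambda>i. u (\<alpha> i))"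
          by (rule sum_vscale_img[OF inj])
        also have "lc \<alpha> S (\<lambda>i. u (\<alpha> i)) = lc \<alpha> S c"
          unfolding lc_def u_def using inj by (simp add: inv_into_f_f cong: sum.cong)
        finally have "(\<Sum>v\<in>\<alpha> ` S. vscale (u v) v) = 0" using lc0 by simp
        moreover have "u (\<alpha> i) \<noteq> 0" using ci i inj by (simp add: u_def inv_into_f_f)
        ultimately have "M.dependent (\<alpha> ` S)"
          using i by (subst M.dependent_finite[OF finI]) blast
        then show False using li by (simp add: lin_indep_def)
      qed
    qed
  next
    assume r: "rind \<alpha> UNIV S"
    show "lin_indep (\<alpha> ` S)" unfolding lin_indep_def
    proof
      assume "M.dependent (\<alpha> ` S)"
      then obtain u where u: "\<exists>v\<in>\<alpha> ` S. u v \<noteq> 0" "(\<Sum>v\<in>\<alpha> ` S. vscale (u v) v) = 0"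
        by (subst (asm) M.dependent_finite[OF finI]) blast
      then have "lc \<alpha> S (\<lambda>i. u (\<alpha> i)) = 0" using sum_vscale_img[OF inj, of u] by simp
      then have "\<forall>i\<in>S. u (\<alpha> i) = 0" using r unfolding rind_UNIV by blast
      then show False using u(1) by blast
    qed
  qed
qed

lemma span_lc:
  assumes fin: "finite S" and inj: "inj_on \<alpha> S"
  shows "module.span vscale (\<alpha> ` S) = UNIV \<longleftrightarrow> (\<forall>w. \<exists>c. w = lc \<alpha> S c)"
proof -
  interpret M: module vscale by (rule module_vscale)
  have finI: "finite (\<alpha> ` S)" using fin by simp
  have "M.span (\<alpha> ` S) = range (\<lambda>u. \<Sum>v\<in>\<alpha> ` S. vscale (u v) v)"
    by (rule M.span_finite[OF finI])
  also have "\<dots> = range (\<lambda>u. lc \<alpha> S (\<lambda>i. u (\<alpha> i)))"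
    by (simp add: sum_vscale_img[OF inj])
  also have "\<dots> = range (lc \<alpha> S)"
  proof
    show "range (\<lambda>u. lc \<alpha> S (\<lambda>i. u (\<alpha> i))) \<subseteq> range (lc \<alpha> S)" by blast
    show "range (lc \<alpha> S) \<subseteq> range (\<lambda>u. lc \<alpha> S (\<lambda>i. u (\<alpha> i)))"
    proof
      fix w assume "w \<in> range (lc \<alpha> S)"
      then obtain c where w: "w = lc \<alpha> S c" by blast
      have lcc: "lc \<alpha> S (\<lambda>i. (\<lambda>v. c (inv_into S \<alpha> v)) (\<alpha> i)) = lc \<alpha> S c"
        unfolding lc_def using inj by (simp add: inv_into_f_f cong: sum.cong)
      show "w \<in> range (\<lambda>u. lc \<alpha> S (\<lambda>i. u (\<alpha> i)))"
      proof (rule image_eqI[where x = "\<lambda>v. c (inv_into S \<alpha> v)"])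
        show "w = lc \<alpha> S (\<lambda>i. (\<lambda>v. c (inv_into S \<alpha> v)) (\<alpha> i))" using w lcc by simp
      qed simp
    qed
  qed
  finally have eq: "M.span (\<alpha> ` S) = range (lc \<alpha> S)" .
  show ?thesis
  proof
    assume "M.span (\<alpha> ` S) = UNIV"
    then have r: "range (lc \<alpha> S) = UNIV" using eq by simp
    show "\<forall>w. \<exists>c. w = lc \<alpha> S c"
    proof
      fix w
      have "w \<in> range (lc \<alpha> S)" using r by blast
      then show "\<exists>c. w = lc \<alpha> S c" by blast
    qed
  next
    assume h: "\<forall>w. \<exists>c. w = lc \<alpha> S c"
    have "range (lc \<alpha> S) = UNIV"
    proof (rule set_eqI)
      fix w
      obtain c where "w = lc \<alpha> S c" using h by blast
      then show "w \<in> range (lc \<alpha> S) \<longleftrightarrow> w \<in> UNIV" by blast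
    qed
    then show "M.span (\<alpha> ` S) = UNIV" using eq by simp
  qed
qed

lemma calB_facts:
  assumes "\<sigma> \<in> calB \<alpha> N" "inj_on \<alpha> {..<N}"
  shows "\<sigma> \<subseteq> {..<N}" "finite \<sigma>" "inj_on \<alpha> \<sigma>" "rind \<alpha> UNIV \<sigma>" "\<forall>w. \<exists>c. w = lc \<alpha> \<sigma> c"
proof -
  show s: "\<sigma> \<subseteq> {..<N}" using assms by (simp add: calB_def)
  show f: "finite \<sigma>" using s finite_subset by blast
  show i: "inj_on \<alpha> \<sigma>" using s assms(2) inj_on_subset by blast
  show "rind \<alpha> UNIV \<sigma>" using assms(1) lin_indep_rind[OF f i] by (simp add: calB_def)
  show "\<forall>w. \<exists>c. w = lc \<alpha> \<sigma> c" using assms(1) span_lc[OF f i] by (simp add: calB_def)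
qed

lemma calB_intro:
  assumes "\<sigma> \<subseteq> {..<N}" "inj_on \<alpha> {..<N}" "rind \<alpha> UNIV \<sigma>" "\<forall>w. \<exists>c. w = lc \<alpha> \<sigma> c"
  shows "\<sigma> \<in> calB \<alpha> N"
proof -
  have f: "finite \<sigma>" using assms(1) finite_subset by blast
  have i: "inj_on \<alpha> \<sigma>" using assms(1,2) inj_on_subset by blast
  show ?thesis using assms lin_indep_rind[OF f i] span_lc[OF f i] by (simp add: calB_def)
qed

lemma lc_cong: "(\<And>i. i \<in> S \<Longrightarrow> c i = d i) \<Longrightarrow> lc \<alpha> S c = lc \<alpha> S d"
  unfolding lc_def by (auto intro!: sum.cong)

lemma coef_spec:
  assumes "\<sigma> \<in> calB \<alpha> N" "inj_on \<alpha> {..<N}"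
  shows "(\<forall>\<beta>. \<beta> \<notin> \<sigma> \<longrightarrow> coef \<alpha> \<sigma> a \<beta> = 0) \<and> \<alpha> a = lc \<alpha> \<sigma> (coef \<alpha> \<sigma> a)"
    and "\<And>c. (\<forall>\<beta>. \<beta> \<notin> \<sigma> \<longrightarrow> c \<beta> = 0) \<Longrightarrow> \<alpha> a = lc \<alpha> \<sigma> c \<Longrightarrow> coef \<alpha> \<sigma> a = c"
proof -
  note F = calB_facts[OF assms]
  have ex: "\<exists>c. (\<forall>\<beta>. \<beta> \<notin> \<sigma> \<longrightarrow> c \<beta> = 0) \<and> \<alpha> a = lc \<alpha> \<sigma> c"
  proof -
    obtain c where c: "\<alpha> a = lc \<alpha> \<sigma> c" using F(5) by blast
    define c' where "c' \<beta> = (if \<beta> \<in> \<sigma> then c \<beta> else 0)" for \<beta>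
    have "lc \<alpha> \<sigma> c' = lc \<alpha> \<sigma> c" by (rule lc_cong) (simp add: c'_def)
    then show ?thesis using c by (intro exI[of _ c']) (simp add: c'_def)
  qed
  have un: "c1 = c2" if "(\<forall>\<beta>. \<beta> \<notin> \<sigma> \<longrightarrow> c1 \<beta> = 0) \<and> \<alpha> a = lc \<alpha> \<sigma> c1"
      "(\<forall>\<beta>. \<beta> \<notin> \<sigma> \<longrightarrow> c2 \<beta> = 0) \<and> \<alpha> a = lc \<alpha> \<sigma> c2" for c1 c2
  proof
    fix \<beta>
    have "lc \<alpha> \<sigma> (\<lambda>i. c1 i - c2 i) = 0"
      using that by (simp add: lc_def fun_eq_iff left_diff_distrib sum_subtractf)
    then have "\<forall>i\<in>\<sigma>. c1 i - c2 i = 0" using F(4) unfolding rind_UNIV by blast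
    then show "c1 \<beta> = c2 \<beta>" using that by (cases "\<beta> \<in> \<sigma>") auto
  qed
  define P where "P c \<longleftrightarrow> (\<forall>\<beta>. \<beta> \<notin> \<sigma> \<longrightarrow> c \<beta> = 0) \<and> \<alpha> a = lc \<alpha> \<sigma> c" for c
  have ex1: "\<exists>!c. P c" unfolding P_def using ex un by blast
  have cdef: "coef \<alpha> \<sigma> a = (THE c. P c)"
    by (simp add: coef_def sum_vscale P_def)
  have "P (THE c. P c)" using ex1 by (rule theI')
  then show "(\<forall>\<beta>. \<beta> \<notin> \<sigma> \<longrightarrow> coef \<alpha> \<sigma> a \<beta> = 0) \<and> \<alpha> a = lc \<alpha> \<sigma> (coef \<alpha> \<sigma> a)"
    unfolding cdef P_def .
  show "coef \<alpha> \<sigma> a = c" if "\<forall>\<beta>. \<beta> \<notin> \<sigma> \<longrightarrow> c \<beta> = 0" "\<alpha> a = lc \<alpha> \<sigma> c" for c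
  proof -
    have "P c" using that by (simp add: P_def)
    then have "(THE c. P c) = c" using ex1 by (rule the1_equality[rotated])
    then show ?thesis using cdef by simp
  qed
qed

lemma lc_apply: "lc \<alpha> S c n = (\<Sum>i\<in>S. c i * \<alpha> i n)"
  by (simp add: lc_def)

lemma exchange:
  fixes \<alpha> :: "nat \<Rightarrow> ('n::finite \<Rightarrow> 'k::field)"
  assumes sig: "\<sigma> \<in> calB \<alpha> N" and inj: "inj_on \<alpha> {..<N}" and a: "a < N" "a \<notin> \<sigma>"
    and b: "\<beta> \<in> \<sigma>" and Cb: "coef \<alpha> \<sigma> a \<beta> \<noteq> 0"
  shows "insert a (\<sigma> - {\<beta>}) \<in> calB \<alpha> N"
proof -
  note F = calB_facts[OF sig inj]
  define C where "C = coef \<alpha> \<sigma> a"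
  have Cb': "C \<beta> \<noteq> 0" using Cb by (simp add: C_def)
  have Ca: "\<alpha> a = lc \<alpha> \<sigma> C" using coef_spec(1)[OF sig inj, of a] by (simp add: C_def)
  have fin: "finite (\<sigma> - {\<beta>})" using F(2) by simp
  have an: "a \<notin> \<sigma> - {\<beta>}" using a by simp
  have rem: "(\<Sum>\<gamma>\<in>\<sigma>. f \<gamma>) = f \<beta> + (\<Sum>\<gamma>\<in>\<sigma> - {\<beta>}. f \<gamma>)" for f :: "nat \<Rightarrow> 'k"
    using F(2) b by (rule sum.remove)
  have aexp: "\<alpha> a n = C \<beta> * \<alpha> \<beta> n + (\<Sum>\<gamma>\<in>\<sigma> - {\<beta>}. C \<gamma> * \<alpha> \<gamma> n)" for n
    using Ca by (simp add: lc_apply rem)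
  have lc': "lc \<alpha> (insert a (\<sigma> - {\<beta>})) d n = d a * \<alpha> a n + (\<Sum>\<gamma>\<in>\<sigma> - {\<beta>}. d \<gamma> * \<alpha> \<gamma> n)" for d n
    using fin an by (simp add: lc_apply)
  show ?thesis
  proof (rule calB_intro[OF _ inj])
    show "insert a (\<sigma> - {\<beta>}) \<subseteq> {..<N}" using F(1) a by auto
    show "rind \<alpha> UNIV (insert a (\<sigma> - {\<beta>}))" unfolding rind_UNIV
    proof (intro allI impI)
      fix d assume d0: "lc \<alpha> (insert a (\<sigma> - {\<beta>})) d = 0"
      define e where "e \<gamma> = d a * C \<gamma> + (if \<gamma> = \<beta> then 0 else d \<gamma>)" for \<gamma>
      have "lc \<alpha> \<sigma> e n = 0" for n
      proof -
        have "lc \<alpha> \<sigma> e n = d a * (\<Sum>\<gamma>\<in>\<sigma>. C \<gamma> * \<alpha> \<gamma> n) + (\<Sum>\<gamma>\<in>\<sigma>. (if \<gamma> = \<beta> then 0 else d \<gamma>) * \<alpha> \<gamma> n)"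
          by (simp add: lc_apply e_def distrib_right sum.distrib sum_distrib_left mult.assoc)
        also have "(\<Sum>\<gamma>\<in>\<sigma>. (if \<gamma> = \<beta> then 0 else d \<gamma>) * \<alpha> \<gamma> n) = (\<Sum>\<gamma>\<in>\<sigma> - {\<beta>}. d \<gamma> * \<alpha> \<gamma> n)"
          by (simp add: rem)
        also have "(\<Sum>\<gamma>\<in>\<sigma>. C \<gamma> * \<alpha> \<gamma> n) = \<alpha> a n" using Ca by (simp add: lc_apply)
        also have "d a * \<alpha> a n + (\<Sum>\<gamma>\<in>\<sigma> - {\<beta>}. d \<gamma> * \<alpha> \<gamma> n) = 0"
          using d0 lc'[of d n] by (simp add: fun_eq_iff)
        finally show ?thesis .
      qed
      then have "lc \<alpha> \<sigma> e = 0" by (simp add: fun_eq_iff)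
      then have e0: "\<forall>\<gamma>\<in>\<sigma>. e \<gamma> = 0" using F(4) unfolding rind_UNIV by blast
      then have "e \<beta> = 0" using b by blast
      then have "d a * C \<beta> = 0" by (simp add: e_def)
      then have da: "d a = 0" using Cb' by simp
      show "\<forall>i\<in>insert a (\<sigma> - {\<beta>}). d i = 0"
      proof
        fix i assume i: "i \<in> insert a (\<sigma> - {\<beta>})"
        show "d i = 0"
        proof (cases "i = a")
          case True then show ?thesis using da by simp
        next
          case False
          then have "i \<in> \<sigma>" "i \<noteq> \<beta>" using i by auto
          then have "e i = 0" using e0 by blast
          then show ?thesis using da \<open>i \<noteq> \<beta>\<close> by (simp add: e_def)
        qed
      qed
    qed
    show "\<forall>w. \<exists>c. w = lc \<alpha> (insert a (\<sigma> - {\<beta>})) c"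
    proof
      fix w
      obtain e where w: "w = lc \<alpha> \<sigma> e" using F(5) by blast
      define c where "c \<gamma> = (if \<gamma> = a then e \<beta> / C \<beta> else e \<gamma> - e \<beta> * C \<gamma> / C \<beta>)" for \<gamma>
      have "w n = lc \<alpha> (insert a (\<sigma> - {\<beta>})) c n" for n
      proof -
        have s1: "(\<Sum>\<gamma>\<in>\<sigma> - {\<beta>}. c \<gamma> * \<alpha> \<gamma> n)
            = (\<Sum>\<gamma>\<in>\<sigma> - {\<beta>}. e \<gamma> * \<alpha> \<gamma> n) - (e \<beta> / C \<beta>) * (\<Sum>\<gamma>\<in>\<sigma> - {\<beta>}. C \<gamma> * \<alpha> \<gamma> n)"
        proof -
          have "(\<Sum>\<gamma>\<in>\<sigma> - {\<beta>}. c \<gamma> * \<alpha> \<gamma> n)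
              = (\<Sum>\<gamma>\<in>\<sigma> - {\<beta>}. e \<gamma> * \<alpha> \<gamma> n - (e \<beta> / C \<beta>) * (C \<gamma> * \<alpha> \<gamma> n))"
            by (rule sum.cong) (use an in \<open>auto simp: c_def algebra_simps\<close>)
          then show ?thesis by (simp add: sum_subtractf sum_distrib_left)
        qed
        have "lc \<alpha> (insert a (\<sigma> - {\<beta>})) c n
            = (e \<beta> / C \<beta>) * (C \<beta> * \<alpha> \<beta> n + (\<Sum>\<gamma>\<in>\<sigma> - {\<beta>}. C \<gamma> * \<alpha> \<gamma> n))
              + ((\<Sum>\<gamma>\<in>\<sigma> - {\<beta>}. e \<gamma> * \<alpha> \<gamma> n) - (e \<beta> / C \<beta>) * (\<Sum>\<gamma>\<in>\<sigma> - {\<beta>}. C \<gamma> * \<alpha> \<gamma> n))"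
          unfolding lc' s1 aexp[symmetric] by (simp add: c_def)
        also have "\<dots> = e \<beta> * \<alpha> \<beta> n + (\<Sum>\<gamma>\<in>\<sigma> - {\<beta>}. e \<gamma> * \<alpha> \<gamma> n)"
          using Cb' by (simp add: field_simps)
        also have "\<dots> = w n" using w by (simp add: lc_apply rem)
        finally show ?thesis by simp
      qed
      then show "\<exists>c. w = lc \<alpha> (insert a (\<sigma> - {\<beta>})) c" by (intro exI[of _ c]) (simp add: fun_eq_iff)
    qed
  qed
qed

lemma not_Bset:
  fixes \<alpha> :: "nat \<Rightarrow> ('n::finite \<Rightarrow> 'k::field)"
  assumes sig: "\<sigma> \<in> calB \<alpha> N" and inj: "inj_on \<alpha> {..<N}" and nB: "\<sigma> \<notin> Bset \<alpha> N"
  shows "\<exists>j<N. j \<notin> \<sigma> \<and> (\<forall>\<beta>. coef \<alpha> \<sigma> j \<beta> \<noteq> 0 \<longrightarrow> \<beta> \<in> \<sigma> \<and> j < \<beta>)"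
proof -
  note F = calB_facts[OF sig inj]
  obtain j where j: "j < N" "j \<notin> \<sigma>" and dep: "\<not> lin_indep (\<alpha> ` ({j} \<union> {i\<in>\<sigma>. i > j}))"
    using sig nB by (auto simp: Bset_def)
  define T' where "T' = {i\<in>\<sigma>. j < i}"
  have T: "{j} \<union> {i\<in>\<sigma>. i > j} = insert j T'" by (auto simp: T'_def)
  have finT': "finite T'" using F(2) by (simp add: T'_def)
  have jT': "j \<notin> T'" by (simp add: T'_def)
  have subN: "insert j T' \<subseteq> {..<N}" using F(1) j by (auto simp: T'_def)
  have injT: "inj_on \<alpha> (insert j T')" using inj subN inj_on_subset by blast
  have "\<not> rind \<alpha> UNIV (insert j T')"
  proof -
    have "lin_indep (\<alpha> ` (insert j T')) = rind \<alpha> UNIV (insert j T')"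
      using lin_indep_rind[OF _ injT] finT' by simp
    moreover have "\<not> lin_indep (\<alpha> ` (insert j T'))" using dep unfolding T .
    ultimately show ?thesis by simp
  qed
  then obtain d where d0: "lc \<alpha> (insert j T') d = 0" and dn: "\<exists>i\<in>insert j T'. d i \<noteq> 0"
    unfolding rind_UNIV by blast
  have lcT: "lc \<alpha> (insert j T') d n = d j * \<alpha> j n + lc \<alpha> T' d n" for n
    using finT' jT' by (simp add: lc_apply)
  have rT': "rind \<alpha> UNIV T'" using rind_mono[OF F(4) _ F(2)] by (simp add: T'_def)
  have dj: "d j \<noteq> 0"
  proof
    assume "d j = 0"
    then have "lc \<alpha> T' d = 0" using d0 lcT by (simp add: fun_eq_iff)
    then have "\<forall>i\<in>T'. d i = 0" using rT' unfolding rind_UNIV by blast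
    then show False using dn \<open>d j = 0\<close> by blast
  qed
  define c where "c \<beta> = (if \<beta> \<in> \<sigma> \<and> j < \<beta> then - d \<beta> / d j else 0)" for \<beta>
  have "\<alpha> j = lc \<alpha> \<sigma> c"
  proof
    fix n
    have "lc \<alpha> \<sigma> c n = (\<Sum>\<beta>\<in>\<sigma>. if j < \<beta> then - d \<beta> / d j * \<alpha> \<beta> n else 0)"
      unfolding lc_apply by (rule sum.cong) (auto simp: c_def)
    also have "\<dots> = (\<Sum>\<beta>\<in>T'. - d \<beta> / d j * \<alpha> \<beta> n)"
      unfolding T'_def using F(2) by (subst sum.inter_filter) simp_all
    also have "\<dots> = - (lc \<alpha> T' d n) / d j"
      by (simp add: lc_apply sum_divide_distrib sum_negf)
    also have "\<dots> = \<alpha> j n" using lcT[of n] d0 dj by (simp add: fun_eq_iff field_simps add_eq_0_iff)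
    finally show "\<alpha> j n = lc \<alpha> \<sigma> c n" by simp
  qed
  then have "coef \<alpha> \<sigma> j = c" by (intro coef_spec(2)[OF sig inj]) (auto simp: c_def)
  then show ?thesis using j by (intro exI[of _ j]) (auto simp: c_def split: if_splits)
qed

definition Kset :: "(nat \<Rightarrow> ('n::finite \<Rightarrow> 'k::field)) \<Rightarrow> nat \<Rightarrow> (nat set \<Rightarrow> 'k) set" where
  "Kset \<alpha> N = {c. (\<forall>\<tau>. \<tau> \<notin> calB \<alpha> N \<longrightarrow> c \<tau> = 0) \<and>
            (\<forall>x\<in>regular_set \<alpha> N. (\<Sum>\<sigma>\<in>calB \<alpha> N. c \<sigma> * phi \<alpha> \<sigma> x) = 0)}"

lemma finite_calB: "finite (calB \<alpha> N)"
proof -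
  have "calB \<alpha> N \<subseteq> Pow {..<N}" by (auto simp: calB_def)
  then show ?thesis by (rule finite_subset) simp
qed

lemma Bset_calB: "Bset \<alpha> N \<subseteq> calB \<alpha> N"
  by (auto simp: Bset_def)

lemma Kset_subspace: "module.subspace fscale (Kset \<alpha> N)"
proof -
  interpret M: module fscale by (rule module_fscale)
  show ?thesis
  proof (rule M.subspaceI)
    show "0 \<in> Kset \<alpha> N" by (simp add: Kset_def)
    show "x + y \<in> Kset \<alpha> N" if "x \<in> Kset \<alpha> N" "y \<in> Kset \<alpha> N" for x y
      using that by (simp add: Kset_def distrib_right sum.distrib)
    show "fscale c x \<in> Kset \<alpha> N" if "x \<in> Kset \<alpha> N" for c x
      using that by (simp add: Kset_def fscale_def sum_distrib_left[symmetric] mult.assoc)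
  qed
qed

lemma os_in_K:
  fixes \<alpha> :: "nat \<Rightarrow> ('n::finite \<Rightarrow> 'k::field)"
  assumes sig: "\<sigma> \<in> calB \<alpha> N" and inj: "inj_on \<alpha> {..<N}" and a: "a < N" "a \<notin> \<sigma>"
  shows "os_rel \<alpha> \<sigma> a \<in> Kset \<alpha> N"
proof -
  note F = calB_facts[OF sig inj]
  define C where "C = coef \<alpha> \<sigma> a"
  define s where "s \<beta> = insert a (\<sigma> - {\<beta>})" for \<beta>
  have sB: "s \<beta> \<in> calB \<alpha> N" if "\<beta> \<in> \<sigma>" "C \<beta> \<noteq> 0" for \<beta>
    unfolding s_def by (rule exchange[OF sig inj a that(1)]) (use that in \<open>simp add: C_def\<close>)
  have os: "os_rel \<alpha> \<sigma> a \<tau> = (if \<tau> = \<sigma> then 1 else 0) - (\<Sum>\<beta>\<in>\<sigma>. if C \<beta> \<noteq> 0 \<and> \<tau> = s \<beta> then C \<beta> else 0)" for \<tau>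
    unfolding os_rel_def C_def s_def by (rule refl)
  have A: "os_rel \<alpha> \<sigma> a \<tau> = 0" if "\<tau> \<notin> calB \<alpha> N" for \<tau>
  proof -
    have "\<tau> \<noteq> \<sigma>" using that sig by blast
    moreover have "(\<Sum>\<beta>\<in>\<sigma>. if C \<beta> \<noteq> 0 \<and> \<tau> = s \<beta> then C \<beta> else 0) = 0"
    proof (rule sum.neutral, rule ballI)
      fix \<beta> assume b: "\<beta> \<in> \<sigma>"
      show "(if C \<beta> \<noteq> 0 \<and> \<tau> = s \<beta> then C \<beta> else 0) = 0"
      proof (cases "C \<beta> \<noteq> 0 \<and> \<tau> = s \<beta>")
        case True
        then have "\<tau> \<in> calB \<alpha> N" using sB[OF b] by simp
        then show ?thesis using that by simp
      qed simp
    qed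
    ultimately show ?thesis by (simp add: os)
  qed
  have B: "(\<Sum>\<tau>\<in>calB \<alpha> N. os_rel \<alpha> \<sigma> a \<tau> * phi \<alpha> \<tau> x) = 0" if x: "x \<in> regular_set \<alpha> N" for x
  proof -
    have lx: "pairing (\<alpha> i) x \<noteq> 0" if "i < N" for i using x that by (simp add: regular_set_def)
    define P where "P = (\<Prod>i\<in>\<sigma>. pairing (\<alpha> i) x)"
    have Pn: "P \<noteq> 0" unfolding P_def using F(1,2) lx by (subst prod_zero_iff) auto
    have la: "pairing (\<alpha> a) x \<noteq> 0" using lx a by simp
    have inner: "(\<Sum>\<tau>\<in>calB \<alpha> N. (if C \<beta> \<noteq> 0 \<and> \<tau> = s \<beta> then C \<beta> else 0) * phi \<alpha> \<tau> x)
        = C \<beta> * phi \<alpha> (s \<beta>) x" if b: "\<beta> \<in> \<sigma>" for \<beta>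
    proof (cases "C \<beta> = 0")
      case True then show ?thesis by simp
    next
      case False
      have "(\<Sum>\<tau>\<in>calB \<alpha> N. (if C \<beta> \<noteq> 0 \<and> \<tau> = s \<beta> then C \<beta> else 0) * phi \<alpha> \<tau> x)
          = (\<Sum>\<tau>\<in>calB \<alpha> N. if \<tau> = s \<beta> then C \<beta> * phi \<alpha> \<tau> x else 0)"
        by (rule sum.cong) (use False in auto)
      also have "\<dots> = C \<beta> * phi \<alpha> (s \<beta>) x"
        using sum.delta[OF finite_calB, of "s \<beta>" "\<lambda>\<tau>. C \<beta> * phi \<alpha> \<tau> x" \<alpha> N] sB[OF b False] by simp
      finally show ?thesis .
    qed
    have phis: "phi \<alpha> (s \<beta>) x = pairing (\<alpha> \<beta>) x / (pairing (\<alpha> a) x * P)" if b: "\<beta> \<in> \<sigma>" for \<beta>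
    proof -
      have lb: "pairing (\<alpha> \<beta>) x \<noteq> 0" using lx F(1) b by auto
      have "P = pairing (\<alpha> \<beta>) x * (\<Prod>i\<in>\<sigma> - {\<beta>}. pairing (\<alpha> i) x)"
        unfolding P_def using F(2) b by (rule prod.remove)
      moreover have "(\<Prod>i\<in>s \<beta>. pairing (\<alpha> i) x) = pairing (\<alpha> a) x * (\<Prod>i\<in>\<sigma> - {\<beta>}. pairing (\<alpha> i) x)"
        unfolding s_def using F(2) a by simp
      ultimately show ?thesis using lb by (simp add: phi_def)
    qed
    have "(\<Sum>\<beta>\<in>\<sigma>. C \<beta> * phi \<alpha> (s \<beta>) x) = (\<Sum>\<beta>\<in>\<sigma>. C \<beta> * pairing (\<alpha> \<beta>) x) / (pairing (\<alpha> a) x * P)"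
      by (simp add: phis sum_divide_distrib)
    also have "(\<Sum>\<beta>\<in>\<sigma>. C \<beta> * pairing (\<alpha> \<beta>) x) = pairing (\<alpha> a) x"
      using coef_spec(1)[OF sig inj, of a] by (simp add: C_def pairing_lc')
    also have "pairing (\<alpha> a) x / (pairing (\<alpha> a) x * P) = phi \<alpha> \<sigma> x"
      using la Pn by (simp add: phi_def P_def)
    finally have key: "(\<Sum>\<beta>\<in>\<sigma>. C \<beta> * phi \<alpha> (s \<beta>) x) = phi \<alpha> \<sigma> x" .
    have "(\<Sum>\<tau>\<in>calB \<alpha> N. os_rel \<alpha> \<sigma> a \<tau> * phi \<alpha> \<tau> x)
        = (\<Sum>\<tau>\<in>calB \<alpha> N. (if \<tau> = \<sigma> then 1 else 0) * phi \<alpha> \<tau> x)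
          - (\<Sum>\<tau>\<in>calB \<alpha> N. \<Sum>\<beta>\<in>\<sigma>. (if C \<beta> \<noteq> 0 \<and> \<tau> = s \<beta> then C \<beta> else 0) * phi \<alpha> \<tau> x)"
      by (simp add: os left_diff_distrib sum_subtractf sum_distrib_right)
    also have "(\<Sum>\<tau>\<in>calB \<alpha> N. (if \<tau> = \<sigma> then 1 else 0) * phi \<alpha> \<tau> x)
        = (\<Sum>\<tau>\<in>calB \<alpha> N. (if \<tau> = \<sigma> then phi \<alpha> \<tau> x else 0))"
      by (rule sum.cong) simp_all
    also have "(\<Sum>\<tau>\<in>calB \<alpha> N. (if \<tau> = \<sigma> then phi \<alpha> \<tau> x else 0)) = phi \<alpha> \<sigma> x"
      using sum.delta[OF finite_calB, of \<sigma> "\<lambda>\<tau>. phi \<alpha> \<tau> x" \<alpha> N] sig by simp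
    also have "(\<Sum>\<tau>\<in>calB \<alpha> N. \<Sum>\<beta>\<in>\<sigma>. (if C \<beta> \<noteq> 0 \<and> \<tau> = s \<beta> then C \<beta> else 0) * phi \<alpha> \<tau> x)
        = (\<Sum>\<beta>\<in>\<sigma>. \<Sum>\<tau>\<in>calB \<alpha> N. (if C \<beta> \<noteq> 0 \<and> \<tau> = s \<beta> then C \<beta> else 0) * phi \<alpha> \<tau> x)"
      by (rule sum.swap)
    also have "\<dots> = (\<Sum>\<beta>\<in>\<sigma>. C \<beta> * phi \<alpha> (s \<beta>) x)"
      by (rule sum.cong) (simp_all add: inner)
    finally show ?thesis using key by simp
  qed
  show ?thesis using A B by (simp add: Kset_def)
qed

definition OSset :: "(nat \<Rightarrow> ('n::finite \<Rightarrow> 'k::field)) \<Rightarrow> nat \<Rightarrow> (nat set \<Rightarrow> 'k) set" where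
  "OSset \<alpha> N = {os_rel \<alpha> \<sigma> a | \<sigma> a. \<sigma> \<in> calB \<alpha> N \<and> a < N \<and> a \<notin> \<sigma>}"

lemma straighten:
  fixes \<alpha> :: "nat \<Rightarrow> ('n::finite \<Rightarrow> 'k::field)"
  assumes inj: "inj_on \<alpha> {..<N}"
  shows "\<sigma> \<in> calB \<alpha> N \<Longrightarrow> \<exists>d. (\<lambda>\<tau>. (if \<tau> = \<sigma> then 1 else 0) - (if \<tau> \<in> Bset \<alpha> N then d \<tau> else 0))
            \<in> module.span fscale (OSset \<alpha> N)"
proof (induction "sum id \<sigma>" arbitrary: \<sigma> rule: less_induct)
  case less
  interpret M: module fscale by (rule module_fscale)
  note sig = less.prems
  note F = calB_facts[OF sig inj]
  show ?case
  proof (cases "\<sigma> \<in> Bset \<alpha> N")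
    case True
    have "(\<lambda>\<tau>. (if \<tau> = \<sigma> then 1 else 0) - (if \<tau> \<in> Bset \<alpha> N then (if \<tau> = \<sigma> then 1 else 0) else 0)) = (0 :: nat set \<Rightarrow> 'k)"
      using True by (auto simp: fun_eq_iff)
    then show ?thesis using M.span_zero by (intro exI[of _ "\<lambda>\<tau>. if \<tau> = \<sigma> then 1 else 0"]) simp
  next
    case False
    obtain j where j: "j < N" "j \<notin> \<sigma>" and Cj: "\<forall>\<beta>. coef \<alpha> \<sigma> j \<beta> \<noteq> 0 \<longrightarrow> \<beta> \<in> \<sigma> \<and> j < \<beta>"
      using not_Bset[OF sig inj False] by blast
    define C where "C = coef \<alpha> \<sigma> j"
    define s where "s \<beta> = insert j (\<sigma> - {\<beta>})" for \<beta>
    define g where "g \<beta> d = (\<lambda>\<tau>. (if \<tau> = s \<beta> then 1 else 0) - (if \<tau> \<in> Bset \<alpha> N then d \<tau> else 0))"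
      for \<beta> and d :: "nat set \<Rightarrow> 'k"
    have sB: "s \<beta> \<in> calB \<alpha> N" if "\<beta> \<in> \<sigma>" "C \<beta> \<noteq> 0" for \<beta>
      unfolding s_def by (rule exchange[OF sig inj j that(1)]) (use that in \<open>simp add: C_def\<close>)
    have sl: "sum id (s \<beta>) < sum id \<sigma>" if "\<beta> \<in> \<sigma>" "C \<beta> \<noteq> 0" for \<beta>
    proof -
      have "j < \<beta>" using Cj that by (simp add: C_def)
      moreover have "sum id (s \<beta>) = j + sum id (\<sigma> - {\<beta>})"
        unfolding s_def using F(2) j(2) by simp
      moreover have "sum id \<sigma> = \<beta> + sum id (\<sigma> - {\<beta>})"
        using F(2) that(1) by (simp add: sum.remove)
      ultimately show ?thesis by simp
    qed
    have "\<forall>\<beta>. \<exists>d. \<beta> \<in> \<sigma> \<and> C \<beta> \<noteq> 0 \<longrightarrow> g \<beta> d \<in> M.span (OSset \<alpha> N)"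
    proof
      fix \<beta>
      show "\<exists>d. \<beta> \<in> \<sigma> \<and> C \<beta> \<noteq> 0 \<longrightarrow> g \<beta> d \<in> M.span (OSset \<alpha> N)"
      proof (cases "\<beta> \<in> \<sigma> \<and> C \<beta> \<noteq> 0")
        case True
        then have "\<exists>d. g \<beta> d \<in> M.span (OSset \<alpha> N)"
          using less.hyps[OF sl sB] unfolding g_def by blast
        then show ?thesis by blast
      qed blast
    qed
    then obtain D where D: "\<forall>\<beta>. \<beta> \<in> \<sigma> \<and> C \<beta> \<noteq> 0 \<longrightarrow> g \<beta> (D \<beta>) \<in> M.span (OSset \<alpha> N)"
      using choice[of "\<lambda>\<beta> d. \<beta> \<in> \<sigma> \<and> C \<beta> \<noteq> 0 \<longrightarrow> g \<beta> d \<in> M.span (OSset \<alpha> N)"] by blast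
    define d where "d \<tau> = (\<Sum>\<beta>\<in>\<sigma>. if C \<beta> \<noteq> 0 then C \<beta> * D \<beta> \<tau> else 0)" for \<tau>
    define h where "h \<beta> = (\<lambda>\<tau>. if C \<beta> \<noteq> 0 then C \<beta> * g \<beta> (D \<beta>) \<tau> else 0)" for \<beta>
    have hO: "h \<beta> \<in> M.span (OSset \<alpha> N)" if "\<beta> \<in> \<sigma>" for \<beta>
    proof (cases "C \<beta> \<noteq> 0")
      case True
      then have "h \<beta> = fscale (C \<beta>) (g \<beta> (D \<beta>))" by (simp add: h_def fscale_def)
      moreover have "g \<beta> (D \<beta>) \<in> M.span (OSset \<alpha> N)" using D that True by blast
      ultimately show ?thesis using M.span_scale by simp
    next
      case False
      then have "h \<beta> = 0" by (simp add: h_def fun_eq_iff)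
      then show ?thesis using M.span_zero by simp
    qed
    have osO: "os_rel \<alpha> \<sigma> j \<in> M.span (OSset \<alpha> N)"
      by (rule M.span_base) (use sig j in \<open>auto simp: OSset_def\<close>)
    have sumO: "os_rel \<alpha> \<sigma> j + (\<Sum>\<beta>\<in>\<sigma>. h \<beta>) \<in> M.span (OSset \<alpha> N)"
      by (rule M.span_add[OF osO M.span_sum]) (rule hO)
    have os: "os_rel \<alpha> \<sigma> j \<tau> = (if \<tau> = \<sigma> then 1 else 0) - (\<Sum>\<beta>\<in>\<sigma>. if C \<beta> \<noteq> 0 \<and> \<tau> = s \<beta> then C \<beta> else 0)" for \<tau>
      unfolding os_rel_def C_def s_def by (rule refl)
    have eq: "(\<lambda>\<tau>. (if \<tau> = \<sigma> then 1 else 0) - (if \<tau> \<in> Bset \<alpha> N then d \<tau> else 0))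
        = os_rel \<alpha> \<sigma> j + (\<Sum>\<beta>\<in>\<sigma>. h \<beta>)"
    proof
      fix \<tau>
      have dd: "(if \<tau> \<in> Bset \<alpha> N then d \<tau> else 0)
          = (\<Sum>\<beta>\<in>\<sigma>. if C \<beta> \<noteq> 0 then C \<beta> * (if \<tau> \<in> Bset \<alpha> N then D \<beta> \<tau> else 0) else 0)"
      proof (cases "\<tau> \<in> Bset \<alpha> N")
        case True
        show ?thesis unfolding if_P[OF True] d_def by (rule sum.cong) simp_all
      next
        case False
        show ?thesis unfolding if_not_P[OF False] by (rule sum.neutral[symmetric]) simp
      qed
      have "(\<Sum>\<beta>\<in>\<sigma>. h \<beta> \<tau>) = (\<Sum>\<beta>\<in>\<sigma>. (if C \<beta> \<noteq> 0 \<and> \<tau> = s \<beta> then C \<beta> else 0)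
            - (if C \<beta> \<noteq> 0 then C \<beta> * (if \<tau> \<in> Bset \<alpha> N then D \<beta> \<tau> else 0) else 0))"
        by (rule sum.cong) (auto simp: h_def g_def algebra_simps)
      also have "\<dots> = (\<Sum>\<beta>\<in>\<sigma>. if C \<beta> \<noteq> 0 \<and> \<tau> = s \<beta> then C \<beta> else 0) - (if \<tau> \<in> Bset \<alpha> N then d \<tau> else 0)"
        by (simp add: sum_subtractf dd)
      finally have "(\<Sum>\<beta>\<in>\<sigma>. h \<beta> \<tau>) = (\<Sum>\<beta>\<in>\<sigma>. if C \<beta> \<noteq> 0 \<and> \<tau> = s \<beta> then C \<beta> else 0) - (if \<tau> \<in> Bset \<alpha> N then d \<tau> else 0)" .
      then show "(if \<tau> = \<sigma> then 1 else 0) - (if \<tau> \<in> Bset \<alpha> N then d \<tau> else 0)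
          = (os_rel \<alpha> \<sigma> j + (\<Sum>\<beta>\<in>\<sigma>. h \<beta>)) \<tau>"
        by (simp add: os sum_fun_apply')
    qed
    show ?thesis using sumO eq by (intro exI[of _ d]) simp
  qed
qed

lemma sumB:
  "(\<Sum>\<tau>\<in>calB \<alpha> N. (if \<tau> \<in> Bset \<alpha> N then e \<tau> else 0) * phi \<alpha> \<tau> x) = (\<Sum>b\<in>Bset \<alpha> N. e b * phi \<alpha> b x)"
proof -
  have "(\<Sum>\<tau>\<in>calB \<alpha> N. (if \<tau> \<in> Bset \<alpha> N then e \<tau> else 0) * phi \<alpha> \<tau> x)
      = (\<Sum>\<tau>\<in>calB \<alpha> N. if \<tau> \<in> Bset \<alpha> N then e \<tau> * phi \<alpha> \<tau> x else 0)"
    by (rule sum.cong) simp_all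
  also have "\<dots> = (\<Sum>\<tau>\<in>{\<tau>\<in>calB \<alpha> N. \<tau> \<in> Bset \<alpha> N}. e \<tau> * phi \<alpha> \<tau> x)"
    using finite_calB by (subst sum.inter_filter) simp_all
  also have "{\<tau>\<in>calB \<alpha> N. \<tau> \<in> Bset \<alpha> N} = Bset \<alpha> N" using Bset_calB by blast
  finally show ?thesis .
qed

lemma sum_delta_calB:
  assumes "\<sigma> \<in> calB \<alpha> N"
  shows "(\<Sum>\<tau>\<in>calB \<alpha> N. (if \<tau> = \<sigma> then 1 else 0) * phi \<alpha> \<tau> x) = phi \<alpha> \<sigma> x"
proof -
  have "(\<Sum>\<tau>\<in>calB \<alpha> N. (if \<tau> = \<sigma> then 1 else 0) * phi \<alpha> \<tau> x)
      = (\<Sum>\<tau>\<in>calB \<alpha> N. (if \<tau> = \<sigma> then phi \<alpha> \<tau> x else 0))"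
    by (rule sum.cong) simp_all
  also have "\<dots> = phi \<alpha> \<sigma> x"
    using sum.delta[OF finite_calB, of \<sigma> "\<lambda>\<tau>. phi \<alpha> \<tau> x" \<alpha> N] assms by simp
  finally show ?thesis .
qed

theorem mainTheorem9:
  fixes \<alpha> :: "nat \<Rightarrow> ('n::finite \<Rightarrow> 'k::field_char_0)" and N :: nat
  assumes inj: "inj_on \<alpha> {..<N}"
    and nonzero: "\<And>i. i < N \<Longrightarrow> \<alpha> i \<noteq> 0"
    and spanning: "module.span vscale (\<alpha> ` {..<N}) = UNIV"
  shows "(\<forall>c :: nat set \<Rightarrow> 'k.
            (\<forall>x\<in>regular_set \<alpha> N. (\<Sum>b\<in>Bset \<alpha> N. c b * phi \<alpha> b x) = 0)
            \<longrightarrow> (\<forall>b\<in>Bset \<alpha> N. c b = 0))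
       \<and> (\<forall>\<sigma>\<in>calB \<alpha> N. \<exists>c :: nat set \<Rightarrow> 'k.
            \<forall>x\<in>regular_set \<alpha> N. phi \<alpha> \<sigma> x = (\<Sum>b\<in>Bset \<alpha> N. c b * phi \<alpha> b x))
       \<and> {c :: nat set \<Rightarrow> 'k. (\<forall>\<tau>. \<tau> \<notin> calB \<alpha> N \<longrightarrow> c \<tau> = 0) \<and>
            (\<forall>x\<in>regular_set \<alpha> N. (\<Sum>\<sigma>\<in>calB \<alpha> N. c \<sigma> * phi \<alpha> \<sigma> x) = 0)}
         = module.span fscale
             {os_rel \<alpha> \<sigma> a | \<sigma> a. \<sigma> \<in> calB \<alpha> N \<and> a < N \<and> a \<notin> \<sigma>}"
proof -
  interpret M: module fscale by (rule module_fscale)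
  have nzx: "\<forall>i<N. \<exists>x\<in>UNIV. pairing (\<alpha> i) x \<noteq> 0"
  proof (intro allI impI)
    fix i assume "i < N"
    then have "\<alpha> i \<noteq> 0" by (rule nonzero)
    then obtain n0 where "\<alpha> i n0 \<noteq> 0" by (auto simp: fun_eq_iff)
    then have "pairing (\<alpha> i) (\<lambda>n. if n = n0 then 1 else 0) \<noteq> 0" by (simp add: pairing_delta)
    then show "\<exists>x\<in>UNIV. pairing (\<alpha> i) x \<noteq> 0" by blast
  qed
  have reg_eq: "reg \<alpha> UNIV N = regular_set \<alpha> N" by (simp add: reg_def regular_set_def)
  have B_nbc: "nbc \<alpha> UNIV N b" if b: "b \<in> Bset \<alpha> N" for b
  proof -
    have bc: "b \<in> calB \<alpha> N" using b Bset_calB by blast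
    note F = calB_facts[OF bc inj]
    have "rind \<alpha> UNIV (insert j {i\<in>b. j < i})" if j: "j < N" "j \<notin> b" for j
    proof -
      have li: "lin_indep (\<alpha> ` ({j} \<union> {i\<in>b. i > j}))" using b j by (simp add: Bset_def)
      have T: "{j} \<union> {i\<in>b. i > j} = insert j {i\<in>b. j < i}" by auto
      have sub: "insert j {i\<in>b. j < i} \<subseteq> {..<N}" using F(1) j by auto
      have fT: "finite (insert j {i\<in>b. j < i})" using F(2) by simp
      have iT: "inj_on \<alpha> (insert j {i\<in>b. j < i})" using inj sub inj_on_subset by blast
      show ?thesis using li lin_indep_rind[OF fT iT] unfolding T by simp
    qed
    then show ?thesis using F(1,4) by (simp add: nbc_def)
  qed
  have C1: "\<forall>c :: nat set \<Rightarrow> 'k.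
            (\<forall>x\<in>regular_set \<alpha> N. (\<Sum>b\<in>Bset \<alpha> N. c b * phi \<alpha> b x) = 0)
            \<longrightarrow> (\<forall>b\<in>Bset \<alpha> N. c b = 0)"
  proof (intro allI impI ballI)
    fix c :: "nat set \<Rightarrow> 'k" and b
    assume h: "\<forall>x\<in>regular_set \<alpha> N. (\<Sum>b\<in>Bset \<alpha> N. c b * phi \<alpha> b x) = 0" and b: "b \<in> Bset \<alpha> N"
    define c' where "c' b = (if b \<in> Bset \<alpha> N then c b else 0)" for b
    have "c' b = 0"
    proof (rule indep_main[of UNIV N \<alpha> c' b])
      show "subsp (UNIV :: ('n \<Rightarrow> 'k) set)" by (simp add: subsp_def)
      show "\<forall>i<N. \<exists>x\<in>UNIV. pairing (\<alpha> i) x \<noteq> 0" by (rule nzx)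
      show "\<forall>b. \<not> nbc \<alpha> UNIV N b \<longrightarrow> c' b = 0" using B_nbc by (auto simp: c'_def)
      show "\<forall>x\<in>reg \<alpha> UNIV N. (\<Sum>b\<in>Pow {..<N}. c' b * phi \<alpha> b x) = 0"
      proof
        fix x assume x: "x \<in> reg \<alpha> UNIV N"
        have "(\<Sum>b\<in>Pow {..<N}. c' b * phi \<alpha> b x) = (\<Sum>b\<in>Pow {..<N}. if b \<in> Bset \<alpha> N then c b * phi \<alpha> b x else 0)"
          by (rule sum.cong) (simp_all add: c'_def)
        also have "\<dots> = (\<Sum>b\<in>{b\<in>Pow {..<N}. b \<in> Bset \<alpha> N}. c b * phi \<alpha> b x)"
          by (subst sum.inter_filter) simp_all
        also have "{b\<in>Pow {..<N}. b \<in> Bset \<alpha> N} = Bset \<alpha> N"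
          using Bset_calB[of \<alpha> N] unfolding calB_def by blast
        finally show "(\<Sum>b\<in>Pow {..<N}. c' b * phi \<alpha> b x) = 0" using h x reg_eq by simp
      qed
    qed
    then show "c b = 0" using b by (simp add: c'_def)
  qed
  have OK: "M.span (OSset \<alpha> N) \<subseteq> Kset \<alpha> N"
  proof (rule M.span_minimal)
    show "OSset \<alpha> N \<subseteq> Kset \<alpha> N" using os_in_K[OF _ inj] by (auto simp: OSset_def)
    show "M.subspace (Kset \<alpha> N)" by (rule Kset_subspace)
  qed
  define g where "g \<sigma> d = (\<lambda>\<tau>. (if \<tau> = \<sigma> then 1 else 0) - (if \<tau> \<in> Bset \<alpha> N then d \<tau> else 0))"
    for \<sigma> and d :: "nat set \<Rightarrow> 'k"
  have "\<forall>\<sigma>. \<exists>d. \<sigma> \<in> calB \<alpha> N \<longrightarrow> g \<sigma> d \<in> M.span (OSset \<alpha> N)"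
    using straighten[OF inj] unfolding g_def by blast
  then obtain D where D: "\<forall>\<sigma>. \<sigma> \<in> calB \<alpha> N \<longrightarrow> g \<sigma> (D \<sigma>) \<in> M.span (OSset \<alpha> N)"
    using choice[of "\<lambda>\<sigma> d. \<sigma> \<in> calB \<alpha> N \<longrightarrow> g \<sigma> d \<in> M.span (OSset \<alpha> N)"] by blast
  have gval: "(\<Sum>\<tau>\<in>calB \<alpha> N. g \<sigma> d \<tau> * phi \<alpha> \<tau> x) = phi \<alpha> \<sigma> x - (\<Sum>b\<in>Bset \<alpha> N. d b * phi \<alpha> b x)"
    if "\<sigma> \<in> calB \<alpha> N" for \<sigma> d x
    unfolding g_def using that by (simp add: left_diff_distrib sum_subtractf sum_delta_calB sumB)
  have C2: "\<forall>\<sigma>\<in>calB \<alpha> N. \<exists>c :: nat set \<Rightarrow> 'k.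
            \<forall>x\<in>regular_set \<alpha> N. phi \<alpha> \<sigma> x = (\<Sum>b\<in>Bset \<alpha> N. c b * phi \<alpha> b x)"
  proof
    fix \<sigma> assume sig: "\<sigma> \<in> calB \<alpha> N"
    have "g \<sigma> (D \<sigma>) \<in> Kset \<alpha> N" using D sig OK by blast
    then have "\<forall>x\<in>regular_set \<alpha> N. (\<Sum>\<tau>\<in>calB \<alpha> N. g \<sigma> (D \<sigma>) \<tau> * phi \<alpha> \<tau> x) = 0"
      by (simp add: Kset_def)
    then show "\<exists>c :: nat set \<Rightarrow> 'k. \<forall>x\<in>regular_set \<alpha> N. phi \<alpha> \<sigma> x = (\<Sum>b\<in>Bset \<alpha> N. c b * phi \<alpha> b x)"
      using gval[OF sig] by (intro exI[of _ "D \<sigma>"]) simp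
  qed
  have C3: "Kset \<alpha> N = M.span (OSset \<alpha> N)"
  proof
    show "M.span (OSset \<alpha> N) \<subseteq> Kset \<alpha> N" by (rule OK)
    show "Kset \<alpha> N \<subseteq> M.span (OSset \<alpha> N)"
    proof
      fix c assume cK: "c \<in> Kset \<alpha> N"
      then have c0: "\<forall>\<tau>. \<tau> \<notin> calB \<alpha> N \<longrightarrow> c \<tau> = 0" by (simp add: Kset_def)
      define ov where "ov = (\<Sum>\<sigma>\<in>calB \<alpha> N. fscale (c \<sigma>) (g \<sigma> (D \<sigma>)))"
      have oO: "ov \<in> M.span (OSset \<alpha> N)"
        unfolding ov_def by (rule M.span_sum, rule M.span_scale) (use D in blast)
      define e where "e \<tau> = (\<Sum>\<sigma>\<in>calB \<alpha> N. c \<sigma> * D \<sigma> \<tau>)" for \<tau>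
      have cmo: "c - ov = (\<lambda>\<tau>. if \<tau> \<in> Bset \<alpha> N then e \<tau> else 0)"
      proof
        fix \<tau>
        have "ov \<tau> = (\<Sum>\<sigma>\<in>calB \<alpha> N. c \<sigma> * (if \<tau> = \<sigma> then 1 else 0)) - (\<Sum>\<sigma>\<in>calB \<alpha> N. c \<sigma> * (if \<tau> \<in> Bset \<alpha> N then D \<sigma> \<tau> else 0))"
          by (simp add: ov_def sum_fun_apply' fscale_def g_def right_diff_distrib sum_subtractf)
        also have "(\<Sum>\<sigma>\<in>calB \<alpha> N. c \<sigma> * (if \<tau> = \<sigma> then 1 else 0)) = c \<tau>"
        proof -
          have "(\<Sum>\<sigma>\<in>calB \<alpha> N. c \<sigma> * (if \<tau> = \<sigma> then 1 else 0)) = (\<Sum>\<sigma>\<in>calB \<alpha> N. if \<tau> = \<sigma> then c \<sigma> else 0)"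
            by (rule sum.cong) simp_all
          also have "\<dots> = (if \<tau> \<in> calB \<alpha> N then c \<tau> else 0)"
            using sum.delta'[OF finite_calB, of \<tau> c \<alpha> N] by simp
          also have "\<dots> = c \<tau>" using c0 by simp
          finally show ?thesis .
        qed
        also have "(\<Sum>\<sigma>\<in>calB \<alpha> N. c \<sigma> * (if \<tau> \<in> Bset \<alpha> N then D \<sigma> \<tau> else 0)) = (if \<tau> \<in> Bset \<alpha> N then e \<tau> else 0)"
        proof (cases "\<tau> \<in> Bset \<alpha> N")
          case True
          show ?thesis unfolding if_P[OF True] e_def by (rule sum.cong) simp_all
        next
          case False
          show ?thesis unfolding if_not_P[OF False] by (rule sum.neutral) simp
        qed
        finally show "(c - ov) \<tau> = (if \<tau> \<in> Bset \<alpha> N then e \<tau> else 0)" by simp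
      qed
      have "c - ov \<in> Kset \<alpha> N" using M.subspace_diff[OF Kset_subspace cK] oO OK by blast
      then have "\<forall>x\<in>regular_set \<alpha> N. (\<Sum>b\<in>Bset \<alpha> N. e b * phi \<alpha> b x) = 0"
        unfolding cmo by (simp add: Kset_def sumB)
      then have "\<forall>b\<in>Bset \<alpha> N. e b = 0" using C1 by blast
      then have "c - ov = 0" unfolding cmo by (auto simp: fun_eq_iff)
      then have "c = ov" by simp
      then show "c \<in> M.span (OSset \<alpha> N)" using oO by simp
    qed
  qed
  show ?thesis using C1 C2 C3 by (simp add: Kset_def OSset_def)
qed

end
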